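(* Let $\mathcal X=\{1,\ldots,n\}$ be the vertex set of a directed graph with edge energies $U_{ij}\in[0,+\infty]$ (with $U_{ij}=+\infty$ allowed for absent links), and let $B=[b_{ij}]$, $b_{ij}=\exp(-U_{ij})$ (with $\exp(-\infty)=0$). Let $N\ge1$ be such that all entries of $B^N$ are positive, let $\lambda_B$ be the spectral radius of $B$, and let $u,v$ be vectors with positive entries such that $B^Tu=\lambda_Bu$, $Bv=\lambda_Bv$, $\sum_iu_iv_i=1$. Set $\mu_U(i)=u_iv_i$, $R_U=\lambda_B^{-1}\operatorname{diag}(v)^{-1}B\operatorname{diag}(v)$ with entries $(R_U)_{ij}$, and $\mathfrak M_U(x_0,\ldots,x_N)=\mu_U(x_0)(R_U)_{x_0x_1}\cdots(R_U)_{x_{N-1}x_N}$. Let $\mathfrak M^*_U[\delta_1,\delta_n]$ be the minimizer of $\mathbb D(P\|\mathfrak M_U)$ over all probability distributions $P$ on $\mathcal X^{N+1}$ whose marginal at time $0$ is the point mass at node $1$ and whose marginal at time $N$ is the point mass at node $n$. For a path $x=(x_0,\ldots,x_N)$ define its cost $\sum_{t=0}^{N-1}U_{x_tx_{t+1}}$. Then $\mathfrak M^*_U[\delta_1,\delta_n]$ assigns equal probability to any two paths $x\in\mathcal X^{N+1}$ with $x_0=1$, $x_N=n$ having equal cost; in particular, it assigns maximum and equal probability to the minimum-cost paths from $1$ to $n$ of length $N$.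
   Context: Relative entropy of a probability distribution $P$ with respect to a nonnegative measure $Q$ on a finite set: $\mathbb D(P\|Q)=\sum_x P(x)\log\frac{P(x)}{Q(x)}$ if $\mathrm{supp}(P)\subseteq\mathrm{supp}(Q)$ (with $0\log0=0$), and $+\infty$ otherwise. *)

theory Defs
  imports "Jordan_Normal_Form.Spectral_Radius" "HOL-Library.Extended_Real"
begin

definition bmat :: "(nat \<Rightarrow> nat \<Rightarrow> ereal) \<Rightarrow> nat \<Rightarrow> nat \<Rightarrow> real" where
  "bmat U i j = (if U i j = \<infinity> then 0 else exp (- real_of_ereal (U i j)))"

text \<open>B as an n x n complex matrix (index shift: row i of mat = vertex i+1).\<close>
definition Bmat_c :: "nat \<Rightarrow> (nat \<Rightarrow> nat \<Rightarrow> real) \<Rightarrow> complex mat" where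
  "Bmat_c n b = mat n n (\<lambda>(i,j). complex_of_real (b (Suc i) (Suc j)))"

fun mpow :: "nat \<Rightarrow> (nat \<Rightarrow> nat \<Rightarrow> real) \<Rightarrow> nat \<Rightarrow> nat \<Rightarrow> nat \<Rightarrow> real" where
  "mpow n b 0 i j = (if i = j then 1 else 0)"
| "mpow n b (Suc k) i j = (\<Sum>l = 1..n. mpow n b k i l * b l j)"

definition paths :: "nat \<Rightarrow> nat \<Rightarrow> nat list set" where
  "paths n N = {xs. length xs = Suc N \<and> set xs \<subseteq> {1..n}}"

definition is_prob :: "nat list set \<Rightarrow> (nat list \<Rightarrow> real) \<Rightarrow> bool" where
  "is_prob S P \<longleftrightarrow> (\<forall>x\<in>S. P x \<ge> 0) \<and> (\<Sum>x\<in>S. P x) = 1"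

definition marginal :: "nat \<Rightarrow> nat \<Rightarrow> (nat list \<Rightarrow> real) \<Rightarrow> nat \<Rightarrow> nat \<Rightarrow> real" where
  "marginal n N P t i = (\<Sum>xs\<in>{xs\<in>paths n N. xs ! t = i}. P xs)"

definition rel_entropy :: "'a set \<Rightarrow> ('a \<Rightarrow> real) \<Rightarrow> ('a \<Rightarrow> real) \<Rightarrow> ereal" where
  "rel_entropy S P Q =
     (if (\<forall>x\<in>S. P x \<noteq> 0 \<longrightarrow> Q x \<noteq> 0)
      then ereal (\<Sum>x\<in>S. if P x = 0 then 0 else P x * ln (P x / Q x))
      else \<infinity>)"

definition markov_meas ::
  "(nat \<Rightarrow> nat \<Rightarrow> real) \<Rightarrow> real \<Rightarrow> (nat \<Rightarrow> real) \<Rightarrow> (nat \<Rightarrow> real) \<Rightarrow> nat \<Rightarrow> nat list \<Rightarrow> real" where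
  "markov_meas b lam u v N xs =
     u (xs ! 0) * v (xs ! 0) *
     (\<Prod>t<N. inverse lam * inverse (v (xs ! t)) * b (xs ! t) (xs ! Suc t) * v (xs ! Suc t))"

definition path_cost :: "(nat \<Rightarrow> nat \<Rightarrow> ereal) \<Rightarrow> nat \<Rightarrow> nat list \<Rightarrow> ereal" where
  "path_cost U N xs = (\<Sum>t<N. U (xs ! t) (xs ! Suc t))"

end

theory Submission
  imports Defs
begin

definition fE :: "ereal \<Rightarrow> real" where
  "fE c = (if c = \<infinity> then 0 else exp (- real_of_ereal c))"

lemma bmat_fE: "bmat U i j = fE (U i j)" by (simp add: bmat_def fE_def)
lemma fE_nonneg: "fE c \<ge> 0" by (simp add: fE_def)
lemma bmat_nonneg: "bmat U i j \<ge> 0" by (simp add: bmat_def)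

lemma fE_add: assumes "a \<ge> 0" "b \<ge> 0" shows "fE (a+b) = fE a * fE b"
  using assms by (cases a; cases b) (auto simp: fE_def exp_add[symmetric])

lemma fE_prod: "finite T \<Longrightarrow> (\<forall>t\<in>T. g t \<ge> 0) \<Longrightarrow> (\<Prod>t\<in>T. fE (g t)) = fE (\<Sum>t\<in>T. g t)"
proof (induction T rule: finite_induct)
  case empty then show ?case by (simp add: fE_def zero_ereal_def)
next
  case (insert x F)
  have "(\<Sum>t\<in>F. g t) \<ge> 0" using insert by (simp add: sum_nonneg)
  then show ?case using insert by (simp add: fE_add)
qed

lemma fE_mono: assumes "0 \<le> a" "a \<le> b" shows "fE b \<le> fE a"
  using assms by (cases a; cases b) (auto simp: fE_def)

lemma prod_telescope_inv:
  assumes "\<forall>t\<le>k. g t \<noteq> (0::real)"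
  shows "(\<Prod>t<k. inverse (g t) * g (Suc t)) = g k / g 0"
  using assms by (induction k) (auto simp: field_simps)

lemma markov_meas_eq:
  assumes "\<forall>t\<le>N. v (xs ! t) \<noteq> 0"
  shows "markov_meas b lam u v N xs = u (xs!0) * v (xs!N) * inverse lam ^ N * (\<Prod>t<N. b (xs!t) (xs!Suc t))"
proof -
  have "(\<Prod>t<N. inverse lam * inverse (v (xs ! t)) * b (xs ! t) (xs ! Suc t) * v (xs ! Suc t))
      = (\<Prod>t<N. inverse lam * (b (xs ! t) (xs ! Suc t) * (inverse (v (xs ! t)) * v (xs ! Suc t))))"
    by (intro prod.cong) (auto simp: ac_simps)
  also have "\<dots> = inverse lam ^ N * ((\<Prod>t<N. b (xs ! t) (xs ! Suc t)) * (\<Prod>t<N. inverse (v (xs ! t)) * v (xs ! Suc t)))"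
    by (simp add: prod.distrib)
  also have "(\<Prod>t<N. inverse (v (xs ! t)) * v (xs ! Suc t)) = v (xs!N) / v (xs!0)"
    using prod_telescope_inv[of N "\<lambda>t. v (xs!t)"] assms by simp
  finally show ?thesis using assms by (simp add: markov_meas_def field_simps)
qed

lemma mpow_nonneg: "\<forall>i j. b i j \<ge> (0::real) \<Longrightarrow> mpow n b k i j \<ge> 0"
  by (induction k arbitrary: j) (auto intro!: sum_nonneg)

lemma mpow_path:
  assumes b: "\<forall>i j. b i j \<ge> 0" and i: "i \<in> {1..n}" 
  shows "j \<in> {1..n} \<Longrightarrow> mpow n b k i j > 0 \<Longrightarrow>
     \<exists>xs\<in>paths n k. xs!0 = i \<and> xs!k = j \<and> (\<Prod>t<k. b (xs!t) (xs!Suc t)) > 0"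
proof (induction k arbitrary: j)
  case 0
  have "i = j" using 0 by (simp split: if_splits)
  then show ?case using i by (intro bexI[of _ "[i]"]) (auto simp: paths_def)
next
  case (Suc k)
  have "(\<Sum>l = 1..n. mpow n b k i l * b l j) \<noteq> 0" using Suc.prems by simp
  then obtain l where l: "l \<in> {1..n}" and ne: "mpow n b k i l * b l j \<noteq> 0"
    by (meson sum.neutral)
  have "mpow n b k i l \<ge> 0" using mpow_nonneg[OF b] by blast
  with ne have m: "mpow n b k i l > 0" by (auto simp: less_le)
  have bl: "b l j > 0" using ne b by (auto simp: less_le)
  obtain xs where xs: "xs \<in> paths n k" "xs!0 = i" "xs!k = l" "(\<Prod>t<k. b (xs!t) (xs!Suc t)) > 0"
    using Suc.IH[OF l m] by blast
  have len: "length xs = Suc k" using xs(1) by (simp add: paths_def)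
  define ys where "ys = xs @ [j]"
  have "ys \<in> paths n (Suc k)" using xs(1) Suc.prems by (simp add: paths_def ys_def)
  moreover have "ys!0 = i" using xs len by (simp add: ys_def nth_append)
  moreover have "ys!Suc k = j" using len by (simp add: ys_def nth_append)
  moreover have "(\<Prod>t<Suc k. b (ys!t) (ys!Suc t)) = (\<Prod>t<k. b (xs!t) (xs!Suc t)) * b l j"
  proof -
    have "(\<Prod>t<k. b (ys!t) (ys!Suc t)) = (\<Prod>t<k. b (xs!t) (xs!Suc t))"
      using len by (intro prod.cong) (auto simp: ys_def nth_append)
    moreover have "b (ys!k) (ys!Suc k) = b l j" using len xs(3) by (simp add: ys_def nth_append)
    ultimately show ?thesis by simp
  qed
  ultimately show ?case using xs(4) bl by (intro bexI[of _ ys]) auto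
qed


theorem theorem6p1:
  fixes n N :: nat and U :: "nat \<Rightarrow> nat \<Rightarrow> ereal"
    and u v :: "nat \<Rightarrow> real" and P :: "nat list \<Rightarrow> real"
  assumes n1: "n \<ge> 1"
    and U_nonneg: "\<forall>i\<in>{1..n}. \<forall>j\<in>{1..n}. U i j \<ge> 0"
    and N1: "N \<ge> 1"
    and prim: "\<forall>i\<in>{1..n}. \<forall>j\<in>{1..n}. mpow n (bmat U) N i j > 0"
    and u_pos: "\<forall>i\<in>{1..n}. u i > 0"
    and v_pos: "\<forall>i\<in>{1..n}. v i > 0"
    and u_eig: "\<forall>j\<in>{1..n}. (\<Sum>i=1..n. bmat U i j * u i)
                   = spectral_radius (Bmat_c n (bmat U)) * u j"
    and v_eig: "\<forall>i\<in>{1..n}. (\<Sum>j=1..n. bmat U i j * v j)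
                   = spectral_radius (Bmat_c n (bmat U)) * v i"
    and uv_norm: "(\<Sum>i=1..n. u i * v i) = 1"
    and P_feas: "is_prob (paths n N) P
                 \<and> (\<forall>i\<in>{1..n}. marginal n N P 0 i = (if i = 1 then 1 else 0))
                 \<and> (\<forall>i\<in>{1..n}. marginal n N P N i = (if i = n then 1 else 0))"
    and P_min: "\<forall>Q. is_prob (paths n N) Q
                 \<and> (\<forall>i\<in>{1..n}. marginal n N Q 0 i = (if i = 1 then 1 else 0))
                 \<and> (\<forall>i\<in>{1..n}. marginal n N Q N i = (if i = n then 1 else 0))
                 \<longrightarrow> rel_entropy (paths n N) P
                       (markov_meas (bmat U) (spectral_radius (Bmat_c n (bmat U))) u v N)
                     \<le> rel_entropy (paths n N) Q
                       (markov_meas (bmat U) (spectral_radius (Bmat_c n (bmat U))) u v N)"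
  shows "(\<forall>x\<in>paths n N. \<forall>y\<in>paths n N.
           x ! 0 = 1 \<and> x ! N = n \<and> y ! 0 = 1 \<and> y ! N = n
           \<and> path_cost U N x = path_cost U N y \<longrightarrow> P x = P y)
         \<and> (\<forall>x\<in>paths n N. x ! 0 = 1 \<and> x ! N = n
              \<and> (\<forall>y\<in>paths n N. y ! 0 = 1 \<and> y ! N = n \<longrightarrow> path_cost U N x \<le> path_cost U N y)
              \<longrightarrow> (\<forall>y\<in>paths n N. P y \<le> P x))"
proof -
  define lam where "lam = spectral_radius (Bmat_c n (bmat U))"
  define M where "M = markov_meas (bmat U) lam u v N"
  define S where "S = paths n N"
  define A where "A = {x\<in>S. x!0 = 1 \<and> x!N = n}"
  define w where "w x = (\<Prod>t<N. bmat U (x!t) (x!Suc t))" for x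
  have finS: "finite S"
  proof -
    have "S = {xs. set xs \<subseteq> {1..n} \<and> length xs = Suc N}" by (auto simp: S_def paths_def)
    then show ?thesis using finite_lists_length_eq[of "{1..n}" "Suc N"] by simp
  qed
  have AS: "A \<subseteq> S" by (auto simp: A_def)
  have finA: "finite A" using finS AS finite_subset by blast
  have elem: "x!t \<in> {1..n}" if "x \<in> S" "t \<le> N" for x t
  proof -
    have "length x = Suc N" "set x \<subseteq> {1..n}" using that(1) by (auto simp: S_def paths_def)
    then have "x!t \<in> set x" using that(2) by (intro nth_mem) simp
    then show ?thesis using \<open>set x \<subseteq> {1..n}\<close> by blast
  qed
  have n_in: "n \<in> {1..n}" "1 \<in> {1..n}" using n1 by auto
  have lam_pos: "lam > 0"
  proof (rule ccontr)
    assume "\<not> lam > 0"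
    have "(\<Sum>i=1..n. bmat U i n * u i) = lam * u n" using u_eig n_in by (simp add: lam_def)
    also have "\<dots> \<le> 0" using \<open>\<not> lam > 0\<close> u_pos n_in(1) by (intro mult_nonpos_nonneg) (auto simp del: atLeastAtMost_iff)
    finally have s0: "(\<Sum>i=1..n. bmat U i n * u i) \<le> 0" .
    have nn: "\<forall>i\<in>{1..n}. bmat U i n * u i \<ge> 0" using u_pos bmat_nonneg by (simp add: less_imp_le)
    have "(\<Sum>i=1..n. bmat U i n * u i) = 0" using s0 nn sum_nonneg[of "{1..n}"] by (meson order_antisym)
    then have "\<forall>i\<in>{1..n}. bmat U i n * u i = 0" using nn sum_nonneg_eq_0_iff[of "{1..n}" "\<lambda>i. bmat U i n * u i"] by simp
    then have bz: "\<forall>i\<in>{1..n}. bmat U i n = 0" using u_pos by (metis less_irrefl mult_eq_0_iff)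
    obtain k where k: "N = Suc k" using N1 by (cases N) auto
    have "mpow n (bmat U) N 1 n = 0" using bz by (simp add: k)
    then show False using prim n_in by fastforce
  qed
  have w_nn: "w x \<ge> 0" for x by (simp add: w_def prod_nonneg bmat_nonneg)
  have Mform: "M x = u (x!0) * v (x!N) * inverse lam ^ N * w x" if "x \<in> S" for x
    unfolding M_def w_def
    by (rule markov_meas_eq) (use elem[OF that] v_pos in fastforce)
  define c where "c = u 1 * v n * inverse lam ^ N"
  have c_pos: "c > 0" using u_pos v_pos n_in lam_pos by (simp add: c_def)
  have MA: "M x = c * w x" if "x \<in> A" for x
    using that Mform[of x] by (auto simp: A_def c_def)
  define Z where "Z = (\<Sum>x\<in>A. w x)"
  have Z_pos: "Z > 0"
  proof -
    obtain x0 where x0: "x0 \<in> paths n N" "x0!0 = 1" "x0!N = n" "(\<Prod>t<N. bmat U (x0!t) (x0!Suc t)) > 0"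
      using mpow_path[of "bmat U" 1 n n N] bmat_nonneg n_in prim by blast
    have "x0 \<in> A" using x0 by (simp add: A_def S_def)
    then show ?thesis unfolding Z_def using x0(4) finA w_nn
      by (intro sum_pos2[of A x0]) (auto simp: w_def)
  qed
  have Pnn: "\<forall>x\<in>S. P x \<ge> 0" and Psum: "(\<Sum>x\<in>S. P x) = 1"
    using P_feas by (auto simp: is_prob_def S_def)
  have Pzero: "P x = 0" if "x \<in> S" "x \<notin> A" for x
  proof -
    have split: "(\<Sum>x\<in>S. P x) = (\<Sum>x\<in>{x\<in>S. Q x}. P x) + (\<Sum>x\<in>{x\<in>S. \<not> Q x}. P x)" for Q
      unfolding sum.inter_filter[OF finS] sum.distrib[symmetric] by (rule sum.cong) auto
    have m0: "(\<Sum>x\<in>{x\<in>S. x!0 = 1}. P x) = 1"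
      using P_feas n_in by (auto simp: marginal_def S_def)
    have mN: "(\<Sum>x\<in>{x\<in>S. x!N = n}. P x) = 1"
      using P_feas n_in by (auto simp: marginal_def S_def)
    have z0: "(\<Sum>x\<in>{x\<in>S. x!0 \<noteq> 1}. P x) = 0" using split[of "\<lambda>x. x!0 = 1"] m0 Psum by simp
    have zN: "(\<Sum>x\<in>{x\<in>S. x!N \<noteq> n}. P x) = 0" using split[of "\<lambda>x. x!N = n"] mN Psum by simp
    show ?thesis
    proof (cases "x!0 = 1")
      case True
      then have "x \<in> {x\<in>S. x!N \<noteq> n}" using that by (auto simp: A_def)
      then show ?thesis using zN sum_nonneg_eq_0_iff[of "{x\<in>S. x!N \<noteq> n}" P] finS Pnn by auto
    next
      case False
      then have "x \<in> {x\<in>S. x!0 \<noteq> 1}" using that by (auto simp: A_def)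
      then show ?thesis using z0 sum_nonneg_eq_0_iff[of "{x\<in>S. x!0 \<noteq> 1}" P] finS Pnn by auto
    qed
  qed
  have Ane: "A \<noteq> {}" using Z_pos by (auto simp: Z_def)
  define Qs where "Qs x = (if x \<in> A then w x / Z else 0)" for x
  have Qs_nn: "Qs x \<ge> 0" for x using w_nn Z_pos by (simp add: Qs_def)
  have sumA: "(\<Sum>x\<in>A. w x / Z) = 1" using Z_pos by (simp add: Z_def sum_divide_distrib[symmetric])
  have Qs_sub: "(\<Sum>x\<in>T. Qs x) = (if T \<inter> A = A then 1 else 0)" if "T \<subseteq> S" "T \<inter> A = A \<or> T \<inter> A = {}" for T
  proof -
    have "(\<Sum>x\<in>T. Qs x) = (\<Sum>x\<in>T \<inter> A. w x / Z)"
      using finS that(1) finite_subset by (subst sum.inter_restrict) (auto simp: Qs_def)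
    then show ?thesis using that(2) sumA finA by (auto simp: Z_pos)
  qed
  have Qs_sum: "(\<Sum>x\<in>S. Qs x) = 1" using Qs_sub[of S] AS Int_absorb1[OF AS] by simp
  have Qs_feas: "is_prob S Qs
                 \<and> (\<forall>i\<in>{1..n}. marginal n N Qs 0 i = (if i = 1 then 1 else 0))
                 \<and> (\<forall>i\<in>{1..n}. marginal n N Qs N i = (if i = n then 1 else 0))"
  proof (intro conjI ballI)
    show "is_prob S Qs" using Qs_nn Qs_sum by (simp add: is_prob_def)
  next
    fix i assume i: "i \<in> {1..n}"
    have "{xs\<in>S. xs!0 = i} \<inter> A = (if i = 1 then A else {})" by (auto simp: A_def)
    then show "marginal n N Qs 0 i = (if i = 1 then 1 else 0)"
      using Qs_sub[of "{xs\<in>S. xs!0 = i}"] AS Ane unfolding marginal_def S_def[symmetric]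
      by (auto split: if_splits)
  next
    fix i assume i: "i \<in> {1..n}"
    have "{xs\<in>S. xs!N = i} \<inter> A = (if i = n then A else {})" by (auto simp: A_def)
    then show "marginal n N Qs N i = (if i = n then 1 else 0)"
      using Qs_sub[of "{xs\<in>S. xs!N = i}"] AS Ane unfolding marginal_def S_def[symmetric]
      by (auto split: if_splits)
  qed
  define K where "K = - ln (c * Z)"
  have DQ: "rel_entropy S Qs M = ereal K"
  proof -
    have supp: "\<forall>x\<in>S. Qs x \<noteq> 0 \<longrightarrow> M x \<noteq> 0"
      using MA c_pos by (auto simp: Qs_def)
    have "(\<Sum>x\<in>S. if Qs x = 0 then 0 else Qs x * ln (Qs x / M x)) = (\<Sum>x\<in>S. Qs x * K)"
    proof (rule sum.cong)
      fix x assume x: "x \<in> S"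
      show "(if Qs x = 0 then 0 else Qs x * ln (Qs x / M x)) = Qs x * K"
      proof (cases "Qs x = 0")
        case False
        then have xA: "x \<in> A" and wx: "w x \<noteq> 0" by (auto simp: Qs_def split: if_splits)
        have e: "Qs x / M x = inverse (c * Z)" using xA wx MA[OF xA] c_pos Z_pos by (simp add: Qs_def field_simps)
        have "ln (Qs x / M x) = K" unfolding e K_def using c_pos Z_pos by (intro ln_inverse)
        then show ?thesis using False by simp
      qed simp
    qed simp
    also have "\<dots> = K" using Qs_sum by (simp add: sum_distrib_right[symmetric])
    finally show ?thesis using supp by (simp add: rel_entropy_def)
  qed
  have DP: "rel_entropy S P M \<le> ereal K"
  proof -
    have "rel_entropy S P M \<le> rel_entropy S Qs M"
      using P_min[rule_format, of Qs] Qs_feas unfolding S_def M_def lam_def by blast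
    then show ?thesis using DQ by simp
  qed
  have suppP: "\<forall>x\<in>S. P x \<noteq> 0 \<longrightarrow> M x \<noteq> 0"
  proof (rule ccontr)
    assume "\<not> ?thesis"
    then have "rel_entropy S P M = \<infinity>" by (simp add: rel_entropy_def)
    then show False using DP by simp
  qed
  have sumPM: "(\<Sum>x\<in>S. if P x = 0 then 0 else P x * ln (P x / M x)) \<le> K"
    using DP suppP by (simp add: rel_entropy_def)
  have Ppos_facts: "x \<in> A \<and> w x > 0 \<and> P x > 0 \<and> Qs x > 0 \<and> M x = c * Z * Qs x"
    if "x \<in> S" "P x \<noteq> 0" for x
  proof -
    have xA: "x \<in> A" using that Pzero by blast
    have "M x \<noteq> 0" using suppP that by blast
    then have "w x \<noteq> 0" using MA[OF xA] by simp
    then have wp: "w x > 0" using w_nn[of x] by simp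
    have "P x > 0" using Pnn that by (simp add: less_le)
    then show ?thesis using xA wp MA[OF xA] Z_pos by (simp add: Qs_def)
  qed
  define T where "T = (\<Sum>x\<in>S. if P x = 0 then 0 else P x * (ln (P x) - ln (Qs x)))"
  have PS1: "(\<Sum>x\<in>S. if P x = 0 then 0 else P x) = 1" using Psum by (simp add: if_distrib cong: if_cong)
  have T_le: "T \<le> 0"
  proof -
    have "(\<Sum>x\<in>S. if P x = 0 then 0 else P x * ln (P x / M x))
        = (\<Sum>x\<in>S. (if P x = 0 then 0 else P x * (ln (P x) - ln (Qs x))) + (if P x = 0 then 0 else P x) * K)"
    proof (rule sum.cong)
      fix x assume x: "x \<in> S"
      show "(if P x = 0 then 0 else P x * ln (P x / M x))
        = (if P x = 0 then 0 else P x * (ln (P x) - ln (Qs x))) + (if P x = 0 then 0 else P x) * K"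
      proof (cases "P x = 0")
        case False
        then have f: "P x > 0" "Qs x > 0" "M x = c * Z * Qs x" using Ppos_facts[OF x] by auto
        have "ln (P x / M x) = ln (P x) - ln c - ln Z - ln (Qs x)"
          using f c_pos Z_pos by (simp add: ln_div ln_mult)
        moreover have "K = - ln c - ln Z" using c_pos Z_pos by (simp add: K_def ln_mult)
        ultimately have L: "ln (P x / M x) = (ln (P x) - ln (Qs x)) + K" by simp
        show ?thesis using False by (simp add: L distrib_left)
      qed simp
    qed simp
    also have "\<dots> = T + K" using PS1 by (simp add: T_def sum.distrib sum_distrib_right[symmetric])
    finally show ?thesis using sumPM by simp
  qed
  define h where "h x = (if P x = 0 then 0 else P x * (ln (Qs x) - ln (P x)) - Qs x + P x)" for x
  have h_le: "h x \<le> 0" if "x \<in> S" for x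
  proof (cases "P x = 0")
    case False
    then have f: "P x > 0" "Qs x > 0" using Ppos_facts[OF that] by auto
    have "ln (Qs x / P x) \<le> Qs x / P x - 1" using f by (intro ln_le_minus_one) simp
    then have "ln (Qs x) - ln (P x) \<le> Qs x / P x - 1" using f by (simp add: ln_div)
    then have "P x * (ln (Qs x) - ln (P x)) \<le> P x * (Qs x / P x - 1)" using f by (intro mult_left_mono) auto
    moreover have "P x * (Qs x / P x - 1) = Qs x - P x" using f by (simp add: field_simps)
    ultimately show ?thesis using False by (simp add: h_def)
  qed (simp add: h_def)
  define R where "R = (\<Sum>x\<in>S. if P x = 0 then 0 else Qs x)"
  have R_le: "R \<le> 1"
  proof -
    have "R \<le> (\<Sum>x\<in>S. Qs x)" unfolding R_def using Qs_nn by (intro sum_mono) auto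
    then show ?thesis using Qs_sum by simp
  qed
  have hsum: "(\<Sum>x\<in>S. h x) = - T - R + 1"
  proof -
    have "(\<Sum>x\<in>S. h x) = (\<Sum>x\<in>S. - (if P x = 0 then 0 else P x * (ln (P x) - ln (Qs x))) - (if P x = 0 then 0 else Qs x) + (if P x = 0 then 0 else P x))"
      by (rule sum.cong) (auto simp: h_def algebra_simps)
    also have "\<dots> = - T - R + 1" using PS1 by (simp add: sum.distrib sum_subtractf sum_negf T_def R_def)
    finally show ?thesis .
  qed
  have h0: "h x = 0" if "x \<in> S" for x
  proof -
    have "(\<Sum>x\<in>S. - h x) = 0"
    proof -
      have a: "(\<Sum>x\<in>S. - h x) = T + R - 1" using hsum by (simp add: sum_negf)
      have b: "(\<Sum>x\<in>S. - h x) \<ge> 0" using h_le by (intro sum_nonneg) auto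
      show ?thesis using a b T_le R_le by linarith
    qed
    then have "\<forall>x\<in>S. - h x = 0" using sum_nonneg_eq_0_iff[OF finS, of "\<lambda>x. - h x"] h_le by auto
    then show ?thesis using that by simp
  qed
  have PQ1: "P x = Qs x" if "x \<in> S" "P x \<noteq> 0" for x
  proof -
    have f: "P x > 0" "Qs x > 0" using Ppos_facts[OF that] by auto
    have "P x * (ln (Qs x) - ln (P x)) - Qs x + P x = 0" using h0[OF that(1)] that(2) by (simp add: h_def)
    then have "ln (Qs x) - ln (P x) = Qs x / P x - 1" using f by (simp add: field_simps)
    then have "ln (Qs x / P x) = Qs x / P x - 1" using f by (simp add: ln_div)
    then have "Qs x / P x = 1" using f by (intro ln_eq_minus_one) auto
    then show ?thesis using f by simp
  qed
  have PQ: "P x = Qs x" if "x \<in> S" for x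
  proof (cases "P x = 0")
    case True
    have "R = (\<Sum>x\<in>S. if P x = 0 then 0 else P x)" unfolding R_def by (rule sum.cong) (use PQ1 in auto)
    then have R1: "R = 1" using PS1 by simp
    have "(\<Sum>x\<in>S. Qs x) = R + (\<Sum>x\<in>S. if P x = 0 then Qs x else 0)"
      unfolding R_def sum.distrib[symmetric] by (rule sum.cong) auto
    then have "(\<Sum>x\<in>S. if P x = 0 then Qs x else 0) = 0" using R1 Qs_sum by simp
    then have "\<forall>x\<in>S. (if P x = 0 then Qs x else 0) = 0"
      using sum_nonneg_eq_0_iff[OF finS, of "\<lambda>x. if P x = 0 then Qs x else 0"] Qs_nn by auto
    then show ?thesis using True that by auto
  qed (use PQ1 that in auto)
  have wcost: "w x = fE (path_cost U N x)" if "x \<in> S" for x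
  proof -
    have "w x = (\<Prod>t<N. fE (U (x!t) (x!Suc t)))" by (simp add: w_def bmat_fE)
    also have "\<dots> = fE (\<Sum>t<N. U (x!t) (x!Suc t))"
      using elem[OF that] U_nonneg by (intro fE_prod) auto
    finally show ?thesis by (simp add: path_cost_def)
  qed
  have cost_nn: "path_cost U N x \<ge> 0" if "x \<in> S" for x
    unfolding path_cost_def using elem[OF that] U_nonneg by (intro sum_nonneg) auto
  show ?thesis
  proof (intro conjI ballI impI)
    fix x y assume xy: "x \<in> paths n N" "y \<in> paths n N"
      "x ! 0 = 1 \<and> x ! N = n \<and> y ! 0 = 1 \<and> y ! N = n \<and> path_cost U N x = path_cost U N y"
    then have "x \<in> A" "y \<in> A" "x \<in> S" "y \<in> S" by (auto simp: A_def S_def)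
    then show "P x = P y" using PQ wcost xy(3) by (simp add: Qs_def)
  next
    fix x y assume x: "x \<in> paths n N"
      "x ! 0 = 1 \<and> x ! N = n \<and> (\<forall>y\<in>paths n N. y ! 0 = 1 \<and> y ! N = n \<longrightarrow> path_cost U N x \<le> path_cost U N y)"
      and y: "y \<in> paths n N"
    have xA: "x \<in> A" and xS: "x \<in> S" and yS: "y \<in> S" using x y by (auto simp: A_def S_def)
    show "P y \<le> P x"
    proof (cases "y \<in> A")
      case True
      then have "path_cost U N x \<le> path_cost U N y" using x y by (auto simp: A_def)
      then have "w y \<le> w x" using wcost xS yS fE_mono cost_nn by metis
      then show ?thesis using PQ xS yS xA True Z_pos by (simp add: Qs_def divide_right_mono)
    next
      case False
      then show ?thesis using Pzero yS PQ xS Qs_nn by metis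
    qed
  qed
qed

end
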